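(* Let $G(z,y)$ be the bivariate generating function whose coefficient of $z^ny^k$ is the number of $\mathbf{3}$-free naturally labelled posets on $[n]$ with no isolated elements and exactly $k$ minimal elements. Here $n\ge0$, and the empty poset contributes $1$. Then $$G(z,y)=\frac{1}{1-z^2y^2}\left(1-zy+z\left(G\!\left(\frac{z}{1-zy},\,2y\right)-(1-y)(1-zy)\,G(z,y)\right)\right),$$ and $$G(z,y)=\frac{1}{1+zy}\sum_{k\ge0}\frac{z^ky^k}{\prod_{i=1}^k\big(1-(2^i-1-y)z\big)}.$$
   Context: A partial order $\preceq$ on $[n]$ is naturally labelled if $x\prec y$ implies $x<y$. It is $\mathbf{3}$-free if there are no three elements $x\prec y\prec z$. An element is isolated if it is comparable to no other element. *)

theory Defs
  imports "HOL-Computational_Algebra.Formal_Power_Series"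
begin

text \<open>Posets on [n] = {1..n} are represented by their (reflexive) order relation R.\<close>

definition nat_labelled :: "(nat \<times> nat) set \<Rightarrow> bool" where
  "nat_labelled R \<longleftrightarrow> (\<forall>x y. (x, y) \<in> R \<and> x \<noteq> y \<longrightarrow> x < y)"

definition three_free :: "(nat \<times> nat) set \<Rightarrow> bool" where
  "three_free R \<longleftrightarrow> \<not> (\<exists>x y z. (x, y) \<in> R \<and> x \<noteq> y \<and> (y, z) \<in> R \<and> y \<noteq> z)"

definition isolated :: "nat set \<Rightarrow> (nat \<times> nat) set \<Rightarrow> nat \<Rightarrow> bool" where
  "isolated A R x \<longleftrightarrow> x \<in> A \<and> (\<forall>y\<in>A. y \<noteq> x \<longrightarrow> (x, y) \<notin> R \<and> (y, x) \<notin> R)"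

definition minimal_elems :: "nat set \<Rightarrow> (nat \<times> nat) set \<Rightarrow> nat set" where
  "minimal_elems A R = {x \<in> A. \<forall>y\<in>A. (y, x) \<in> R \<longrightarrow> y = x}"

definition cnt :: "nat \<Rightarrow> nat \<Rightarrow> nat" where
  "cnt n k = card {R. R \<subseteq> {1..n} \<times> {1..n} \<and> partial_order_on {1..n} R \<and> nat_labelled R
      \<and> three_free R \<and> (\<forall>x\<in>{1..n}. \<not> isolated {1..n} R x)
      \<and> card (minimal_elems {1..n} R) = k}"

text \<open>Bivariate series: outer variable z, coefficients are power series in y.\<close>
definition G :: "real fps fps" where
  "G = Abs_fps (\<lambda>n. Abs_fps (\<lambda>k. real (cnt n k)))"

abbreviation zv :: "real fps fps" where "zv \<equiv> fps_X"
abbreviation yv :: "real fps fps" where "yv \<equiv> fps_const fps_X"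

text \<open>Substitution F(z,y) \<mapsto> F(a(z,y), c*y) for a with zero constant term:
  first y \<mapsto> c y in each coefficient, then z \<mapsto> a.\<close>
definition subst2 :: "real fps fps \<Rightarrow> real fps fps \<Rightarrow> real \<Rightarrow> real fps fps" where
  "subst2 F a c = fps_compose (Abs_fps (\<lambda>n. fps_compose (fps_nth F n) (fps_const c * fps_X))) a"

end

theory Submission
  imports Defs
begin
unbundle fps_syntax

definition PS :: "nat \<Rightarrow> (nat \<times> nat) set set" where
  "PS n = {R. R \<subseteq> {1..n}\<times>{1..n} \<and> partial_order_on {1..n} R \<and> nat_labelled R \<and> three_free R}"

lemma PS_iff: "R \<in> PS n \<longleftrightarrow> R \<subseteq> {1..n}\<times>{1..n} \<and> (\<forall>x\<in>{1..n}. (x,x)\<in>R) \<and> nat_labelled R \<and> three_free R"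
proof
  assume "R \<in> PS n" thus "R \<subseteq> {1..n}\<times>{1..n} \<and> (\<forall>x\<in>{1..n}. (x,x)\<in>R) \<and> nat_labelled R \<and> three_free R"
    by (auto simp: PS_def partial_order_on_def preorder_on_def refl_on_def)
next
  assume H: "R \<subseteq> {1..n}\<times>{1..n} \<and> (\<forall>x\<in>{1..n}. (x,x)\<in>R) \<and> nat_labelled R \<and> three_free R"
  have "trans R" unfolding trans_def
  proof (intro allI impI)
    fix x y z assume "(x,y) \<in> R" "(y,z) \<in> R"
    thus "(x,z) \<in> R" using H unfolding three_free_def by (cases "x = y"; cases "y = z") auto
  qed
  moreover have "antisym R" unfolding antisym_def
  proof (intro allI impI)
    fix x y assume "(x,y) \<in> R" "(y,x) \<in> R"
    moreover have NL: "\<forall>x y. (x, y) \<in> R \<and> x \<noteq> y \<longrightarrow> x < y" using H by (simp add: nat_labelled_def)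
    ultimately show "x = y" by (metis less_asym)
  qed
  ultimately show "R \<in> PS n" using H
    by (simp add: PS_def partial_order_on_def preorder_on_def refl_on_def)
qed

lemma finite_PS: "finite (PS n)"
proof -
  have "PS n \<subseteq> Pow ({1..n}\<times>{1..n})"
  proof
    fix R assume "R \<in> PS n" thus "R \<in> Pow ({1..n}\<times>{1..n})" by (simp add: PS_iff)
  qed
  thus ?thesis by (rule finite_subset) auto
qed

definition mins :: "nat \<Rightarrow> (nat \<times> nat) set \<Rightarrow> nat set" where
  "mins n R = minimal_elems {1..n} R"
definition isos :: "nat \<Rightarrow> (nat \<times> nat) set \<Rightarrow> nat set" where
  "isos n R = {x. isolated {1..n} R x}"
definition ext :: "nat \<Rightarrow> (nat \<times> nat) set \<Rightarrow> nat set \<Rightarrow> (nat \<times> nat) set" where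
  "ext n R S = R \<union> (\<lambda>x. (x, Suc n)) ` S \<union> {(Suc n, Suc n)}"
definition restr :: "nat \<Rightarrow> (nat \<times> nat) set \<Rightarrow> (nat \<times> nat) set" where
  "restr n R = R \<inter> ({1..n}\<times>{1..n})"
definition upset :: "nat \<Rightarrow> (nat \<times> nat) set \<Rightarrow> nat set" where
  "upset n R = {x. (x, Suc n) \<in> R \<and> x \<noteq> Suc n}"

lemma mins_sub: "mins n R \<subseteq> {1..n}" by (auto simp: mins_def minimal_elems_def)
lemma isos_sub: "R \<in> PS n \<Longrightarrow> isos n R \<subseteq> mins n R"
  by (auto simp: isos_def mins_def minimal_elems_def isolated_def PS_iff)
lemma finite_mins: "finite (mins n R)" using mins_sub finite_subset by blast
lemma finite_isos: "R \<in> PS n \<Longrightarrow> finite (isos n R)" using isos_sub finite_mins finite_subset by blast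

lemma ext_PS:
  assumes R: "R \<in> PS n" and S: "S \<subseteq> mins n R"
  shows "ext n R S \<in> PS (Suc n)"
proof -
  have S1: "S \<subseteq> {1..n}" using S mins_sub by blast
  have Smin: "\<And>x y. x \<in> S \<Longrightarrow> (y,x) \<in> R \<Longrightarrow> y = x"
    using S R by (auto simp: mins_def minimal_elems_def PS_iff)
  have RA: "R \<subseteq> {1..n}\<times>{1..n}" using R by (simp add: PS_iff)
  show ?thesis
    unfolding PS_iff
  proof (intro conjI)
    show "ext n R S \<subseteq> {1..Suc n} \<times> {1..Suc n}" using RA S1 by (auto simp: ext_def)
    show "\<forall>x\<in>{1..Suc n}. (x, x) \<in> ext n R S" using R by (auto simp: ext_def PS_iff le_Suc_eq)
    show "nat_labelled (ext n R S)" using R S1 by (auto simp: ext_def PS_iff nat_labelled_def)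
    show "three_free (ext n R S)"
      unfolding three_free_def
    proof clarify
      fix x y z assume a: "(x,y) \<in> ext n R S" "x \<noteq> y" "(y,z) \<in> ext n R S" "y \<noteq> z"
      show False
      proof (cases "(y,z) \<in> R")
        case True
        hence "y \<le> n" using RA by auto
        hence "(x,y) \<in> R" using a(1,2) by (auto simp: ext_def)
        moreover have "three_free R" using R by (simp add: PS_iff)
        ultimately show False using True a(2,4) unfolding three_free_def by blast
      next
        case False
        hence "z = Suc n" "y \<in> S" using a(3,4) by (auto simp: ext_def)
        hence "y \<le> n" using S1 by auto
        hence "(x,y) \<in> R" using a(1,2) by (auto simp: ext_def)
        thus False using Smin \<open>y \<in> S\<close> a(2) by blast
      qed
    qed
  qed
qed

lemma restr_PS:
  assumes R: "R \<in> PS (Suc n)"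
  shows "restr n R \<in> PS n" "upset n R \<subseteq> mins n (restr n R)"
proof -
  have H: "R \<subseteq> {1..Suc n}\<times>{1..Suc n}" "\<forall>x\<in>{1..Suc n}. (x,x)\<in>R" "nat_labelled R" "three_free R"
    using R by (auto simp: PS_iff)
  have "nat_labelled (restr n R)" using H(3) by (auto simp: nat_labelled_def restr_def)
  moreover have "three_free (restr n R)" using H(4) unfolding three_free_def restr_def by blast
  moreover have "\<forall>x\<in>{1..n}. (x,x)\<in> restr n R" using H(2) by (auto simp: restr_def)
  ultimately show "restr n R \<in> PS n" by (auto simp: PS_iff restr_def)
  show "upset n R \<subseteq> mins n (restr n R)"
  proof
    fix x assume x: "x \<in> upset n R"
    hence x1: "(x, Suc n) \<in> R" "x \<noteq> Suc n" by (auto simp: upset_def)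
    hence "x \<in> {1..n}" using R by (auto simp: PS_iff)
    moreover have "\<forall>y\<in>{1..n}. (y, x) \<in> restr n R \<longrightarrow> y = x"
    proof (intro ballI impI)
      fix y assume "(y, x) \<in> restr n R"
      hence "(y,x) \<in> R" by (simp add: restr_def)
      moreover have "three_free R" using R by (simp add: PS_iff)
      ultimately show "y = x" using x1 unfolding three_free_def by blast
    qed
    ultimately show "x \<in> mins n (restr n R)" by (auto simp: mins_def minimal_elems_def)
  qed
qed

lemma ext_restr:
  assumes R: "R \<in> PS (Suc n)"
  shows "ext n (restr n R) (upset n R) = R"
proof -
  have RA: "R \<subseteq> {1..Suc n}\<times>{1..Suc n}" "(Suc n, Suc n) \<in> R" and NL: "nat_labelled R"
    using R by (auto simp: PS_iff)
  show ?thesis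
  proof (rule set_eqI, clarify)
    fix a b
    show "(a,b) \<in> ext n (restr n R) (upset n R) \<longleftrightarrow> (a,b) \<in> R"
    proof
      assume "(a,b) \<in> ext n (restr n R) (upset n R)"
      thus "(a,b) \<in> R" using RA by (auto simp: ext_def restr_def upset_def)
    next
      assume ab: "(a,b) \<in> R"
      hence "a \<le> Suc n" "b \<le> Suc n" "1 \<le> a" "1 \<le> b" using RA by auto
      moreover have "a = Suc n \<Longrightarrow> b = Suc n"
        using NL ab \<open>b \<le> Suc n\<close> by (force simp: nat_labelled_def)
      ultimately show "(a,b) \<in> ext n (restr n R) (upset n R)"
        using ab by (auto simp: ext_def restr_def upset_def le_Suc_eq)
    qed
  qed
qed

lemma restr_ext:
  assumes R: "R \<in> PS n" and S: "S \<subseteq> mins n R"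
  shows "restr n (ext n R S) = R" "upset n (ext n R S) = S"
proof -
  have S1: "S \<subseteq> {1..n}" using S mins_sub by blast
  have RA: "R \<subseteq> {1..n}\<times>{1..n}" using R by (simp add: PS_iff)
  show "restr n (ext n R S) = R" using RA by (auto simp: restr_def ext_def)
  show "upset n (ext n R S) = S" using RA S1 by (auto simp: upset_def ext_def)
qed

lemma ext_mem: "(a,b) \<in> ext n R S \<longleftrightarrow> (a,b) \<in> R \<or> (b = Suc n \<and> (a \<in> S \<or> a = Suc n))"
  by (auto simp: ext_def)

lemma mins_ext:
  assumes R: "R \<in> PS n" and S: "S \<subseteq> mins n R"
  shows "mins (Suc n) (ext n R S) = (if S = {} then insert (Suc n) (mins n R) else mins n R)"
proof -
  have S1: "S \<subseteq> {1..n}" using S mins_sub by blast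
  have RA: "R \<subseteq> {1..n}\<times>{1..n}" using R by (simp add: PS_iff)
  have "x \<in> mins (Suc n) (ext n R S) \<longleftrightarrow> x \<in> (if S = {} then insert (Suc n) (mins n R) else mins n R)" for x
  proof (cases "x = Suc n")
    case True
    have "Suc n \<notin> mins n R" using mins_sub by force
    moreover have "(\<forall>y\<in>{1..Suc n}. (y, Suc n) \<in> ext n R S \<longrightarrow> y = Suc n) \<longleftrightarrow> S = {}"
    proof
      assume H: "\<forall>y\<in>{1..Suc n}. (y, Suc n) \<in> ext n R S \<longrightarrow> y = Suc n"
      show "S = {}"
      proof (rule ccontr)
        assume "S \<noteq> {}" then obtain s where "s \<in> S" by blast
        hence "s \<in> {1..n}" "(s, Suc n) \<in> ext n R S" using S1 by (auto simp: ext_mem)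
        thus False using H by auto
      qed
    next
      assume "S = {}" thus "\<forall>y\<in>{1..Suc n}. (y, Suc n) \<in> ext n R S \<longrightarrow> y = Suc n"
        using RA by (auto simp: ext_mem)
    qed
    ultimately show ?thesis using True by (auto simp: mins_def minimal_elems_def)
  next
    case False
    have "(\<forall>y\<in>{1..Suc n}. (y, x) \<in> ext n R S \<longrightarrow> y = x) \<longleftrightarrow> (\<forall>y\<in>{1..n}. (y, x) \<in> R \<longrightarrow> y = x)"
      using RA False by (auto simp: ext_mem)
    moreover have "x \<in> {1..Suc n} \<longleftrightarrow> x \<in> {1..n}" using False by auto
    ultimately show ?thesis using False by (auto simp: mins_def minimal_elems_def)
  qed
  thus ?thesis by blast
qed

lemma isos_ext:
  assumes R: "R \<in> PS n" and S: "S \<subseteq> mins n R"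
  shows "isos (Suc n) (ext n R S) = (if S = {} then insert (Suc n) (isos n R) else isos n R - S)"
proof -
  have S1: "S \<subseteq> {1..n}" using S mins_sub by blast
  have RA: "R \<subseteq> {1..n}\<times>{1..n}" using R by (simp add: PS_iff)
  have A: "{1..Suc n} = insert (Suc n) {1..n}" by auto
  have RSn: "(a, Suc n) \<notin> R" "(Suc n, a) \<notin> R" for a using RA by auto
  have "x \<in> isos (Suc n) (ext n R S) \<longleftrightarrow> x \<in> (if S = {} then insert (Suc n) (isos n R) else isos n R - S)" for x
  proof (cases "x = Suc n")
    case True
    have c1: "Suc n \<notin> isos n R" by (auto simp: isos_def isolated_def)
    have c2: "(\<forall>y\<in>{1..n}. y \<noteq> Suc n \<longrightarrow> (Suc n, y) \<notin> ext n R S \<and> (y, Suc n) \<notin> ext n R S) \<longleftrightarrow> S = {}"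
    proof
      assume H: "\<forall>y\<in>{1..n}. y \<noteq> Suc n \<longrightarrow> (Suc n, y) \<notin> ext n R S \<and> (y, Suc n) \<notin> ext n R S"
      show "S = {}"
      proof (rule ccontr)
        assume "S \<noteq> {}" then obtain s where "s \<in> S" by blast
        hence "s \<in> {1..n}" "(s, Suc n) \<in> ext n R S" using S1 by (auto simp: ext_mem)
        thus False using H by auto
      qed
    next
      assume "S = {}" thus "\<forall>y\<in>{1..n}. y \<noteq> Suc n \<longrightarrow> (Suc n, y) \<notin> ext n R S \<and> (y, Suc n) \<notin> ext n R S"
        using RSn by (simp add: ext_mem)
    qed
    have c3: "x \<in> isos (Suc n) (ext n R S) \<longleftrightarrow> (\<forall>y\<in>{1..n}. y \<noteq> Suc n \<longrightarrow> (Suc n, y) \<notin> ext n R S \<and> (y, Suc n) \<notin> ext n R S)"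
      using True unfolding isos_def isolated_def A by simp
    have c4: "x \<in> isos (Suc n) (ext n R S) \<longleftrightarrow> S = {}" using c2 c3 by blast
    show ?thesis
    proof (cases "S = {}")
      case True
      thus ?thesis using c4 \<open>x = Suc n\<close> by simp
    next
      case False
      hence "x \<notin> isos (Suc n) (ext n R S)" using c4 by blast
      thus ?thesis using False c1 \<open>x = Suc n\<close> by simp
    qed
  next
    case False
    have F1: "(\<forall>y\<in>insert (Suc n) {1..n}. y \<noteq> x \<longrightarrow> (x, y) \<notin> ext n R S \<and> (y, x) \<notin> ext n R S) \<longleftrightarrow>
          (\<forall>y\<in>{1..n}. y \<noteq> x \<longrightarrow> (x, y) \<notin> R \<and> (y, x) \<notin> R) \<and> x \<notin> S"
      using False RSn by (simp add: ext_mem) blast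
    have F2: "x \<in> insert (Suc n) {1..n} \<longleftrightarrow> x \<in> {1..n}" using False by auto
    have "x \<in> isos (Suc n) (ext n R S) \<longleftrightarrow> x \<in> isos n R \<and> x \<notin> S"
    proof -
      have "x \<in> isos (Suc n) (ext n R S) \<longleftrightarrow> x \<in> insert (Suc n) {1..n} \<and>
        (\<forall>y\<in>insert (Suc n) {1..n}. y \<noteq> x \<longrightarrow> (x, y) \<notin> ext n R S \<and> (y, x) \<notin> ext n R S)"
        unfolding isos_def mem_Collect_eq isolated_def A by (rule refl)
      also have "\<dots> \<longleftrightarrow> x \<in> {1..n} \<and> ((\<forall>y\<in>{1..n}. y \<noteq> x \<longrightarrow> (x, y) \<notin> R \<and> (y, x) \<notin> R) \<and> x \<notin> S)"
        by (simp only: F1 F2)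
      also have "\<dots> \<longleftrightarrow> x \<in> isos n R \<and> x \<notin> S"
        unfolding isos_def mem_Collect_eq isolated_def by (simp only: conj_assoc)
      finally show ?thesis .
    qed
    thus ?thesis using False by (cases "S = {}") simp_all
  qed
  thus ?thesis by blast
qed


lemma subset_count:
  assumes M: "finite M" and IM: "I \<subseteq> M"
  shows "card {S. S \<subseteq> M \<and> card (I - S) = j} = (card I choose j) * 2 ^ (card M - card I)"
proof -
  let ?f = "\<lambda>(A, B). (I - A) \<union> B"
  let ?D = "{A. A \<subseteq> I \<and> card A = j} \<times> Pow (M - I)"
  have I: "finite I" using M IM finite_subset by blast
  have img: "{S. S \<subseteq> M \<and> card (I - S) = j} = ?f ` ?D"
  proof (rule set_eqI, rule iffI)
    fix S assume "S \<in> {S. S \<subseteq> M \<and> card (I - S) = j}"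
    hence S: "S \<subseteq> M" "card (I - S) = j" by auto
    have "S = ?f (I - S, S - I)" by auto
    moreover have "(I - S, S - I) \<in> ?D" using S by auto
    ultimately show "S \<in> ?f ` ?D" by blast
  next
    fix S assume "S \<in> ?f ` ?D"
    then obtain A B where AB: "A \<subseteq> I" "card A = j" "B \<subseteq> M - I" "S = (I - A) \<union> B" by auto
    have "I - S = A" using AB by auto
    thus "S \<in> {S. S \<subseteq> M \<and> card (I - S) = j}" using AB IM by auto
  qed
  have inj: "inj_on ?f ?D"
  proof (rule inj_onI)
    fix p q assume hp: "p \<in> ?D" "q \<in> ?D" "?f p = ?f q"
    obtain A B where p: "p = (A,B)" by (cases p)
    obtain A' B' where q: "q = (A',B')" by (cases q)
    have h: "A \<subseteq> I" "B \<inter> I = {}" "A' \<subseteq> I" "B' \<inter> I = {}" "(I - A) \<union> B = (I - A') \<union> B'"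
      using hp p q by auto
    have "A = I - ((I - A) \<union> B)" using h by auto
    also have "\<dots> = A'" using h by auto
    finally have "A = A'" .
    moreover have "B = ((I - A) \<union> B) - I" using h by auto
    moreover have "B' = ((I - A') \<union> B') - I" using h by auto
    ultimately show "p = q" using h(5) p q by simp
  qed
  have "card {S. S \<subseteq> M \<and> card (I - S) = j} = card ?D"
    unfolding img by (rule card_image[OF inj])
  also have "\<dots> = (card I choose j) * 2 ^ (card M - card I)"
    using M I IM by (simp add: card_cartesian_product n_subsets card_Pow card_Diff_subset)
  finally show ?thesis .
qed

definition ff :: "nat \<Rightarrow> nat \<Rightarrow> nat \<Rightarrow> nat" where
  "ff n k j = card {R \<in> PS n. card (mins n R) = k \<and> card (isos n R) = j}"

definition Sig :: "nat \<Rightarrow> ((nat \<times> nat) set \<times> nat set) set" where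
  "Sig n = (SIGMA R:PS n. Pow (mins n R))"

lemma finite_Sig: "finite (Sig n)"
  unfolding Sig_def using finite_PS finite_mins by (intro finite_SigmaI) auto

lemma PS_Suc_image: "PS (Suc n) = (\<lambda>(R,S). ext n R S) ` Sig n"
proof (rule set_eqI, rule iffI)
  fix R assume R: "R \<in> PS (Suc n)"
  have "R = (\<lambda>(R,S). ext n R S) (restr n R, upset n R)" using ext_restr[OF R] by simp
  moreover have "(restr n R, upset n R) \<in> Sig n" using restr_PS[OF R] by (auto simp: Sig_def)
  ultimately show "R \<in> (\<lambda>(R,S). ext n R S) ` Sig n" by blast
next
  fix R assume "R \<in> (\<lambda>(R,S). ext n R S) ` Sig n"
  thus "R \<in> PS (Suc n)" using ext_PS by (auto simp: Sig_def)
qed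

lemma inj_ext: "inj_on (\<lambda>(R,S). ext n R S) (Sig n)"
proof (rule inj_onI, clarify)
  fix R S R' S' assume h: "(R,S) \<in> Sig n" "(R',S') \<in> Sig n" "ext n R S = ext n R' S'"
  have "R = R'" using restr_ext(1)[of R n S] restr_ext(1)[of R' n S'] h by (auto simp: Sig_def)
  moreover have "S = S'" using restr_ext(2)[of R n S] restr_ext(2)[of R' n S'] h by (auto simp: Sig_def)
  ultimately show "R = R' \<and> S = S'" by simp
qed

lemma card_PS_Suc:
  "card {R \<in> PS (Suc n). Q R} = card {p \<in> Sig n. Q ((\<lambda>(R,S). ext n R S) p)}"
proof -
  have "{R \<in> PS (Suc n). Q R} = (\<lambda>(R,S). ext n R S) ` {p \<in> Sig n. Q ((\<lambda>(R,S). ext n R S) p)}"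
    unfolding PS_Suc_image by blast
  thus ?thesis by (simp add: card_image inj_on_subset[OF inj_ext])
qed

lemma Suc_notin: "Suc n \<notin> mins n R" "Suc n \<notin> isos n R"
  using mins_sub[of n R] by (auto simp: isos_def isolated_def)

lemma ff_Suc_aux:
  "ff (Suc n) k j = card {(R,S) \<in> Sig n. if S = {} then card (mins n R) + 1 = k \<and> card (isos n R) + 1 = j
      else card (mins n R) = k \<and> card (isos n R - S) = j}"
proof -
  have "ff (Suc n) k j = card {p \<in> Sig n. (\<lambda>R. card (mins (Suc n) R) = k \<and> card (isos (Suc n) R) = j) ((\<lambda>(R,S). ext n R S) p)}"
    unfolding ff_def by (rule card_PS_Suc)
  also have "{p \<in> Sig n. (\<lambda>R. card (mins (Suc n) R) = k \<and> card (isos (Suc n) R) = j) ((\<lambda>(R,S). ext n R S) p)}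
    = {(R,S) \<in> Sig n. if S = {} then card (mins n R) + 1 = k \<and> card (isos n R) + 1 = j
      else card (mins n R) = k \<and> card (isos n R - S) = j}"
  proof (rule Collect_cong)
    fix p :: "(nat \<times> nat) set \<times> nat set"
    obtain R S where p: "p = (R,S)" by (cases p)
    show "(p \<in> Sig n \<and> (\<lambda>R. card (mins (Suc n) R) = k \<and> card (isos (Suc n) R) = j) ((\<lambda>(R,S). ext n R S) p)) \<longleftrightarrow>
      (case p of (R,S) \<Rightarrow> (R,S) \<in> Sig n \<and> (if S = {} then card (mins n R) + 1 = k \<and> card (isos n R) + 1 = j
      else card (mins n R) = k \<and> card (isos n R - S) = j))"
    proof (cases "(R,S) \<in> Sig n")
      case True
      hence R: "R \<in> PS n" "S \<subseteq> mins n R" by (auto simp: Sig_def)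
      show ?thesis using True p mins_ext[OF R] isos_ext[OF R] Suc_notin[of n R] finite_mins[of n R] finite_isos[OF R(1)]
        by simp
    qed (simp add: p)
  qed
  finally show ?thesis by simp
qed

lemma ff_rec:
  "ff (Suc n) k j + ff n k j = card {R \<in> PS n. card (mins n R) + 1 = k \<and> card (isos n R) + 1 = j}
     + (\<Sum>j'\<le>k. ff n k j' * ((j' choose j) * 2 ^ (k - j')))"
proof -
  define X1 where "X1 = (\<lambda>R. (R, {}::nat set)) ` {R \<in> PS n. card (mins n R) + 1 = k \<and> card (isos n R) + 1 = j}"
  define Y1 where "Y1 = (\<lambda>R. (R, {}::nat set)) ` {R \<in> PS n. card (mins n R) = k \<and> card (isos n R) = j}"
  define X2 where "X2 = {(R,S) \<in> Sig n. S \<noteq> {} \<and> card (mins n R) = k \<and> card (isos n R - S) = j}"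
  define Y where "Y = {(R,S) \<in> Sig n. card (mins n R) = k \<and> card (isos n R - S) = j}"
  have fin: "finite X1" "finite Y1" "finite X2" "finite Y"
    unfolding X1_def Y1_def using finite_PS apply auto[2]
    by (rule finite_subset[OF _ finite_Sig], force simp: X2_def Y_def)+
  have e1: "{(R,S) \<in> Sig n. if S = {} then card (mins n R) + 1 = k \<and> card (isos n R) + 1 = j
      else card (mins n R) = k \<and> card (isos n R - S) = j} = X1 \<union> X2"
    unfolding X1_def X2_def by (auto simp: Sig_def split: if_splits)
  have e2: "Y = Y1 \<union> X2"
    unfolding Y1_def X2_def Y_def by (auto simp: Sig_def)
  have d1: "X1 \<inter> X2 = {}" "Y1 \<inter> X2 = {}" unfolding X1_def Y1_def X2_def by auto
  have c1: "card X1 = card {R \<in> PS n. card (mins n R) + 1 = k \<and> card (isos n R) + 1 = j}"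
    unfolding X1_def by (rule card_image) (auto simp: inj_on_def)
  have c2: "card Y1 = ff n k j"
    unfolding Y1_def ff_def by (rule card_image) (auto simp: inj_on_def)
  have cY: "card Y = (\<Sum>R\<in>{R \<in> PS n. card (mins n R) = k}. (card (isos n R) choose j) * 2 ^ (k - card (isos n R)))"
  proof -
    have "Y = Sigma {R \<in> PS n. card (mins n R) = k} (\<lambda>R. {S. S \<subseteq> mins n R \<and> card (isos n R - S) = j})"
      unfolding Y_def Sig_def by auto
    hence "card Y = (\<Sum>R\<in>{R \<in> PS n. card (mins n R) = k}. card {S. S \<subseteq> mins n R \<and> card (isos n R - S) = j})"
      using finite_PS finite_mins by (simp add: card_SigmaI)
    also have "\<dots> = (\<Sum>R\<in>{R \<in> PS n. card (mins n R) = k}. (card (isos n R) choose j) * 2 ^ (k - card (isos n R)))"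
      by (rule sum.cong) (auto simp: subset_count[OF finite_mins isos_sub])
    finally show ?thesis .
  qed
  have grp: "(\<Sum>R\<in>{R \<in> PS n. card (mins n R) = k}. (card (isos n R) choose j) * 2 ^ (k - card (isos n R)))
     = (\<Sum>j'\<le>k. ff n k j' * ((j' choose j) * 2 ^ (k - j')))"
  proof -
    let ?A = "{R \<in> PS n. card (mins n R) = k}"
    have sub: "(\<lambda>R. card (isos n R)) ` ?A \<subseteq> {..k}"
    proof (rule image_subsetI)
      fix R assume "R \<in> ?A"
      thus "card (isos n R) \<in> {..k}" using card_mono[OF finite_mins isos_sub] by fastforce
    qed
    have "(\<Sum>R\<in>?A. (card (isos n R) choose j) * 2 ^ (k - card (isos n R)))
      = (\<Sum>j'\<le>k. \<Sum>R\<in>{R\<in>?A. card (isos n R) = j'}. (card (isos n R) choose j) * 2 ^ (k - card (isos n R)))"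
      by (rule sum.group[symmetric]) (use finite_PS sub in auto)
    also have "\<dots> = (\<Sum>j'\<le>k. ff n k j' * ((j' choose j) * 2 ^ (k - j')))"
    proof (rule sum.cong[OF refl])
      fix j' assume "j' \<in> {..k}"
      have "{R\<in>?A. card (isos n R) = j'} = {R \<in> PS n. card (mins n R) = k \<and> card (isos n R) = j'}" by auto
      thus "(\<Sum>R\<in>{R\<in>?A. card (isos n R) = j'}. (card (isos n R) choose j) * 2 ^ (k - card (isos n R)))
            = ff n k j' * ((j' choose j) * 2 ^ (k - j'))"
        by (simp add: ff_def)
    qed
    finally show ?thesis .
  qed
  have "ff (Suc n) k j + ff n k j = card X1 + card X2 + card Y1"
    unfolding ff_Suc_aux e1 c2[symmetric] using card_Un_disjoint[OF fin(1) fin(3) d1(1)] by simp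
  also have "\<dots> = card X1 + card Y"
    unfolding e2 using card_Un_disjoint[OF fin(2) fin(3) d1(2)] by simp
  finally show ?thesis using c1 cY grp by simp
qed


lemma ff_gt: "k < j \<Longrightarrow> ff n k j = 0"
proof -
  assume kj: "k < j"
  have e: "{R \<in> PS n. card (mins n R) = k \<and> card (isos n R) = j} = {}"
    using card_mono[OF finite_mins isos_sub] kj by fastforce
  show ?thesis unfolding ff_def e by simp
qed

lemma PS_0: "PS 0 = {{}}" by (auto simp: PS_iff nat_labelled_def three_free_def)

lemma ff_0: "ff 0 k j = (if k = 0 \<and> j = 0 then 1 else 0)"
proof -
  have "mins 0 {} = {}" "isos 0 {} = {}" by (auto simp: mins_def minimal_elems_def isos_def isolated_def)
  thus ?thesis by (simp add: ff_def PS_0 Collect_conv_if)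
qed

lemma cnt_ff: "cnt n k = ff n k 0"
proof -
  have "{R. R \<subseteq> {1..n} \<times> {1..n} \<and> partial_order_on {1..n} R \<and> nat_labelled R
      \<and> three_free R \<and> (\<forall>x\<in>{1..n}. \<not> isolated {1..n} R x)
      \<and> card (minimal_elems {1..n} R) = k} = {R \<in> PS n. card (mins n R) = k \<and> card (isos n R) = 0}"
  proof (rule Collect_cong)
    fix R
    show "(R \<subseteq> {1..n} \<times> {1..n} \<and> partial_order_on {1..n} R \<and> nat_labelled R
      \<and> three_free R \<and> (\<forall>x\<in>{1..n}. \<not> isolated {1..n} R x)
      \<and> card (minimal_elems {1..n} R) = k) \<longleftrightarrow> (R \<in> PS n \<and> card (mins n R) = k \<and> card (isos n R) = 0)"
    proof (cases "R \<in> PS n")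
      case True
      have "card (isos n R) = 0 \<longleftrightarrow> isos n R = {}" using finite_isos[OF True] by simp
      also have "\<dots> \<longleftrightarrow> (\<forall>x\<in>{1..n}. \<not> isolated {1..n} R x)" by (auto simp: isos_def isolated_def)
      finally show ?thesis using True by (auto simp: PS_def mins_def)
    qed (auto simp: PS_def)
  qed
  thus ?thesis by (simp add: cnt_def ff_def)
qed

lemma E_eq: "card {R \<in> PS n. card (mins n R) + 1 = k \<and> card (isos n R) + 1 = j}
   = (if 1 \<le> k \<and> 1 \<le> j then ff n (k - 1) (j - 1) else 0)"
proof (cases "1 \<le> k \<and> 1 \<le> j")
  case True
  hence e: "{R \<in> PS n. card (mins n R) + 1 = k \<and> card (isos n R) + 1 = j} =
         {R \<in> PS n. card (mins n R) = k - 1 \<and> card (isos n R) = j - 1}" by auto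
  show ?thesis unfolding e ff_def using True by simp
next
  case False
  hence e: "{R \<in> PS n. card (mins n R) + 1 = k \<and> card (isos n R) + 1 = j} = {}" by auto
  show ?thesis unfolding e using False by auto
qed

lemma ff_rec': "ff (Suc n) k j + ff n k j = (if 1 \<le> k \<and> 1 \<le> j then ff n (k - 1) (j - 1) else 0)
     + (\<Sum>j'\<le>k. ff n k j' * ((j' choose j) * 2 ^ (k - j')))"
  using ff_rec[of n k j] E_eq[of n k j] by simp

definition cc :: "nat \<Rightarrow> nat \<Rightarrow> nat" where "cc m l = ff m l 0"

definition PP :: "nat \<Rightarrow> bool" where
  "PP n \<longleftrightarrow> (\<forall>k j. ff n k j = (if j \<le> k then (n choose j) * cc (n - j) (k - j) else 0))"

lemma Rec_of_PP:
  assumes "PP m"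
  shows "cc (Suc m) l + cc m l = (\<Sum>i\<le>l. (m choose i) * cc (m - i) (l - i) * 2 ^ (l - i))"
proof -
  have "cc (Suc m) l + cc m l = (\<Sum>j'\<le>l. ff m l j' * 2 ^ (l - j'))"
    using ff_rec'[of m l 0] by (simp add: cc_def)
  also have "\<dots> = (\<Sum>i\<le>l. (m choose i) * cc (m - i) (l - i) * 2 ^ (l - i))"
    using assms by (intro sum.cong) (auto simp: PP_def)
  finally show ?thesis .
qed

lemma reindex:
  assumes jn: "j \<le> n" and jk: "j \<le> k"
  shows "(\<Sum>j'\<le>k. (n choose j') * g j' * (j' choose j)) =
         (n choose j) * (\<Sum>i\<le>k - j. ((n - j) choose i) * g (j + i))"
proof -
  have "(\<Sum>j'\<le>k. (n choose j') * g j' * (j' choose j)) = (\<Sum>j'\<in>{j..k}. (n choose j') * g j' * (j' choose j))"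
    by (rule sum.mono_neutral_right) auto
  also have "{j..k} = (\<lambda>i. j + i) ` {..k - j}"
  proof -
    have "x \<in> {j..k} \<Longrightarrow> x \<in> (\<lambda>i. j + i) ` {..k - j}" for x
      by (rule image_eqI[of _ _ "x - j"]) auto
    thus ?thesis using jk by auto
  qed
  also have "(\<Sum>j'\<in>(\<lambda>i. j + i) ` {..k - j}. (n choose j') * g j' * (j' choose j))
      = (\<Sum>i\<le>k - j. (n choose (j + i)) * g (j + i) * ((j + i) choose j))"
    by (subst sum.reindex) (auto simp: inj_on_def)
  also have "\<dots> = (\<Sum>i\<le>k - j. (n choose j) * (((n - j) choose i) * g (j + i)))"
  proof (rule sum.cong[OF refl])
    fix i
    show "(n choose (j + i)) * g (j + i) * ((j + i) choose j) = (n choose j) * (((n - j) choose i) * g (j + i))"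
    proof (cases "j + i \<le> n")
      case True
      have "(n choose (j + i)) * ((j + i) choose j) = (n choose j) * ((n - j) choose i)"
        using choose_mult[of j "j + i" n] True by simp
      thus ?thesis by (metis (no_types, lifting) mult.assoc mult.commute)
    next
      case False
      thus ?thesis using jn by (simp add: binomial_eq_0)
    qed
  qed
  finally show ?thesis by (simp add: sum_distrib_left)
qed

lemma PP_all: "PP n"
proof (induction n rule: less_induct)
  case (less n)
  show ?case
  proof (cases n)
    case 0
    thus ?thesis by (auto simp: PP_def ff_0 cc_def)
  next
    case (Suc n')
    have IH: "PP m" if "m \<le> n'" for m using less Suc that by auto
    have Rec: "cc (Suc m) l + cc m l = (\<Sum>i\<le>l. (m choose i) * cc (m - i) (l - i) * 2 ^ (l - i))"
      if "m \<le> n'" for m l using Rec_of_PP[OF IH[OF that]] .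
    have "ff (Suc n') k j = (if j \<le> k then (Suc n' choose j) * cc (Suc n' - j) (k - j) else 0)" for k j
    proof (cases "j \<le> k")
      case False thus ?thesis using ff_gt by simp
    next
      case jk: True
      show ?thesis
      proof (cases "j = 0")
        case True thus ?thesis by (simp add: cc_def)
      next
        case j0: False
        have ffn: "ff n' a b = (if b \<le> a then (n' choose b) * cc (n' - b) (a - b) else 0)" for a b
          using IH[of n'] by (simp add: PP_def)
        have rec: "ff (Suc n') k j + ff n' k j = ff n' (k - 1) (j - 1)
            + (\<Sum>j'\<le>k. ff n' k j' * ((j' choose j) * 2 ^ (k - j')))"
          using ff_rec'[of n' k j] jk j0 by simp
        have S: "(\<Sum>j'\<le>k. ff n' k j' * ((j' choose j) * 2 ^ (k - j')))
            = (\<Sum>j'\<le>k. (n' choose j') * (cc (n' - j') (k - j') * 2 ^ (k - j')) * (j' choose j))"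
          by (rule sum.cong[OF refl]) (simp add: ffn mult_ac)
        show ?thesis
        proof (cases "j \<le> n'")
          case jn: True
          have "(\<Sum>j'\<le>k. (n' choose j') * (cc (n' - j') (k - j') * 2 ^ (k - j')) * (j' choose j))
              = (n' choose j) * (\<Sum>i\<le>k - j. ((n' - j) choose i) * (cc (n' - (j + i)) (k - (j + i)) * 2 ^ (k - (j + i))))"
            by (rule reindex[OF jn jk])
          also have "\<dots> = (n' choose j) * (\<Sum>i\<le>k - j. ((n' - j) choose i) * cc (n' - j - i) (k - j - i) * 2 ^ (k - j - i))"
            by (simp add: mult_ac diff_diff_eq)
          also have "\<dots> = (n' choose j) * (cc (Suc (n' - j)) (k - j) + cc (n' - j) (k - j))"
            using Rec[of "n' - j" "k - j"] by simp
          finally have S2: "(\<Sum>j'\<le>k. ff n' k j' * ((j' choose j) * 2 ^ (k - j')))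
              = (n' choose j) * (cc (Suc (n' - j)) (k - j) + cc (n' - j) (k - j))" using S by simp
          have a1: "j - 1 \<le> k - 1" "n' - (j - 1) = Suc (n' - j)" "k - 1 - (j - 1) = k - j"
            using jk j0 jn by auto
          have e1: "ff n' (k - 1) (j - 1) = (n' choose (j - 1)) * cc (Suc (n' - j)) (k - j)"
            using ffn[of "k - 1" "j - 1"] a1 by simp
          have e2: "ff n' k j = (n' choose j) * cc (n' - j) (k - j)" using ffn jk by simp
          have e3: "Suc n' choose j = (n' choose (j - 1)) + (n' choose j)"
            using j0 by (cases j) simp_all
          have e4: "Suc n' - j = Suc (n' - j)" using jn by simp
          show ?thesis using rec S2 e1 e2 e3 e4 jk by (simp add: algebra_simps)
        next
          case jn: False
          have S0: "(\<Sum>j'\<le>k. ff n' k j' * ((j' choose j) * 2 ^ (k - j'))) = 0"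
          proof (rule sum.neutral, rule ballI)
            fix j' assume "j' \<in> {..k}"
            show "ff n' k j' * ((j' choose j) * 2 ^ (k - j')) = 0"
              by (cases "j' \<le> n'") (use jn in \<open>auto simp: ffn\<close>)
          qed
          have e2: "ff n' k j = 0" using ffn jn by simp
          show ?thesis
          proof (cases "j = Suc n'")
            case True
            have "ff n' (k - 1) (j - 1) = cc 0 (k - j)" using ffn[of "k - 1" "j - 1"] True jk by simp
            thus ?thesis using rec S0 e2 True jk by simp
          next
            case False
            hence "n' < j - 1" using jn by simp
            hence "ff n' (k - 1) (j - 1) = 0" using ffn[of "k - 1" "j - 1"] by (simp add: binomial_eq_0)
            thus ?thesis using rec S0 e2 False jn jk by simp
          qed
        qed
      qed
    qed
    thus ?thesis using Suc by (simp add: PP_def)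
  qed
qed

theorem cnt_rec:
  "cnt (Suc m) l + cnt m l = (\<Sum>i\<le>l. (m choose i) * cnt (m - i) (l - i) * 2 ^ (l - i))"
  using Rec_of_PP[OF PP_all] by (simp add: cc_def cnt_ff)

theorem cnt_0: "cnt 0 k = (if k = 0 then 1 else 0)"
  by (simp add: cnt_ff ff_0)


abbreviation Y :: "real fps" where "Y \<equiv> fps_X"

lemma inv_right:
  fixes f :: "real fps fps" assumes "f $ 0 = 1" shows "f * inverse f = 1"
proof -
  have i1: "inverse (1::real fps) = 1" by (rule fps_inverse_one') simp
  have e: "inverse (f $ 0) = 1" using assms i1 by simp
  have "inverse f = fps_right_inverse f 1" unfolding fps_inverse_def[of f] e ..
  thus ?thesis using fps_right_inverse[of f 1] assms by simp
qed

lemma inv_left: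
  fixes f :: "real fps fps" assumes "f $ 0 = 1" shows "inverse f * f = 1"
  using inv_right[OF assms] by (simp add: mult.commute)

lemma inv_unique:
  fixes f g :: "real fps fps" assumes "f $ 0 = 1" "f * g = 1" shows "inverse f = g"
proof -
  have "inverse f = inverse f * (f * g)" using assms by simp
  also have "\<dots> = (inverse f * f) * g" by (simp add: mult.assoc)
  finally show ?thesis using inv_left[OF assms(1)] by simp
qed

definition w :: "real fps fps" where "w = inverse (1 - zv * yv)"

lemma w_eq: "w = Abs_fps (\<lambda>j. Y ^ j)"
  unfolding w_def
proof (rule inv_unique)
  show "(1 - zv * yv) $ 0 = 1" by simp
  show "(1 - zv * yv) * Abs_fps (\<lambda>j. Y ^ j) = 1"
  proof (rule fps_ext)
    fix n
    define A :: "real fps fps" where "A = Abs_fps (\<lambda>j. Y ^ j)"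
    have e: "(1 - zv * yv) * A = A - zv * (yv * A)" by (simp add: algebra_simps)
    have "(A - zv * (yv * A)) $ n = (1 :: real fps fps) $ n"
    proof (cases n)
      case 0 thus ?thesis by (simp add: A_def)
    next
      case (Suc m) thus ?thesis by (simp add: A_def fps_mult_left_const_nth)
    qed
    thus "((1 - zv * yv) * Abs_fps (\<lambda>j. Y ^ j)) $ n = (1 :: real fps fps) $ n"
      using e by (simp add: A_def)
  qed
qed

lemma w_mul: "w * (1 - zv * yv) = 1"
  unfolding w_def by (rule inv_left) simp

lemma wn: "w $ k = Y ^ k" by (simp add: w_eq)

lemma wpow: "(w ^ Suc m) $ j = of_nat ((m + j) choose m) * Y ^ j"
proof (induction m arbitrary: j)
  case 0
  thus ?case by (simp add: w_eq)
next
  case (Suc m)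
  have "(w ^ Suc (Suc m)) $ j = (w ^ Suc m * w) $ j" by (simp add: mult.commute)
  also have "\<dots> = (\<Sum>i=0..j. of_nat ((m + i) choose m) * Y ^ i * Y ^ (j - i))"
    by (simp add: fps_mult_nth Suc.IH wn del: power_Suc)
  also have "\<dots> = (\<Sum>i=0..j. of_nat ((m + i) choose m) * Y ^ j)"
    by (rule sum.cong[OF refl]) (simp add: mult.assoc power_add[symmetric])
  also have "\<dots> = of_nat (\<Sum>i\<le>j. (m + i) choose m) * Y ^ j"
    by (simp add: sum_distrib_right atLeast0AtMost)
  also have "\<dots> = of_nat ((Suc m + j) choose Suc m) * Y ^ j"
    by (simp add: choose_rising_sum(1))
  finally show ?case .
qed

definition aa :: "real fps fps" where "aa = zv * w"

lemma aa0: "aa $ 0 = 0" by (simp add: aa_def)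

lemma aapow: "aa ^ m = zv ^ m * w ^ m" by (simp add: aa_def power_mult_distrib)

lemma aapow_nth_zero: "i < m \<Longrightarrow> (aa ^ m) $ i = 0"
  by (simp add: aapow fps_X_power_mult_nth)

lemma aapow_w: "(aa ^ m * w) $ n = (if m \<le> n then of_nat (n choose m) * Y ^ (n - m) else 0)"
proof -
  have e: "aa ^ m * w = zv ^ m * w ^ Suc m" by (simp add: aapow mult.assoc)
  show ?thesis unfolding e fps_X_power_mult_nth wpow by auto
qed

definition sc :: "real fps \<Rightarrow> real fps" where "sc p = p oo (fps_const 2 * fps_X)"

lemma V_formula:
  "(subst2 F aa 2 * w) $ n = (\<Sum>m=0..n. sc (F $ m) * (of_nat (n choose m) * Y ^ (n - m)))"
proof -
  define M where "M = Abs_fps (\<lambda>n. fps_compose (fps_nth F n) (fps_const 2 * fps_X))"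
  have s: "subst2 F aa 2 = M oo aa" by (simp add: subst2_def M_def)
  have "(subst2 F aa 2 * w) $ n = (\<Sum>i=0..n. (\<Sum>m=0..i. M $ m * (aa ^ m) $ i) * w $ (n - i))"
    by (simp add: s fps_mult_nth fps_compose_nth)
  also have "\<dots> = (\<Sum>i=0..n. \<Sum>m=0..n. M $ m * (aa ^ m) $ i * w $ (n - i))"
  proof (rule sum.cong[OF refl])
    fix i assume i: "i \<in> {0..n}"
    have "(\<Sum>m=0..i. M $ m * (aa ^ m) $ i) = (\<Sum>m=0..n. M $ m * (aa ^ m) $ i)"
      by (rule sum.mono_neutral_left) (use i aapow_nth_zero in auto)
    thus "(\<Sum>m=0..i. M $ m * (aa ^ m) $ i) * w $ (n - i) = (\<Sum>m=0..n. M $ m * (aa ^ m) $ i * w $ (n - i))"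
      by (simp add: sum_distrib_right)
  qed
  also have "\<dots> = (\<Sum>m=0..n. M $ m * (aa ^ m * w) $ n)"
    by (subst sum.swap) (simp add: fps_mult_nth sum_distrib_left mult.assoc)
  also have "\<dots> = (\<Sum>m=0..n. sc (F $ m) * (of_nat (n choose m) * Y ^ (n - m)))"
    by (rule sum.cong[OF refl]) (simp add: aapow_w M_def sc_def)
  finally show ?thesis .
qed


lemma sum_refl: "(\<Sum>i=0..m. g i) = (\<Sum>i=0..m. g (m - i))" for g :: "nat \<Rightarrow> 'a::comm_monoid_add"
  by (rule sum.reindex_bij_witness[of _ "\<lambda>i. m - i" "\<lambda>i. m - i"]) auto

lemma cnt_rec2:
  "cnt (Suc m) k + cnt m k = (\<Sum>i=0..m. (m choose i) * (if m - i \<le> k then 2^(k-(m-i)) * cnt i (k-(m-i)) else 0))"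
proof -
  define f where "f i = (m choose i) * cnt (m - i) (k - i) * 2 ^ (k - i)" for i
  have "cnt (Suc m) k + cnt m k = (\<Sum>i\<le>k. f i)" using cnt_rec by (simp add: f_def)
  also have "\<dots> = (\<Sum>i\<in>{i. i \<le> k \<and> i \<le> m}. f i)"
    by (rule sum.mono_neutral_right) (auto simp: f_def binomial_eq_0)
  also have "\<dots> = (\<Sum>i=0..m. if i \<le> k then f i else 0)"
  proof -
    have e: "{i. i \<le> k \<and> i \<le> m} = {i\<in>{0..m}. i \<le> k}" by auto
    show ?thesis unfolding e by (rule sum.inter_filter) simp
  qed
  also have "\<dots> = (\<Sum>i=0..m. if m - i \<le> k then f (m - i) else 0)"
    by (rule sum_refl)
  also have "\<dots> = (\<Sum>i=0..m. (m choose i) * (if m - i \<le> k then 2^(k-(m-i)) * cnt i (k-(m-i)) else 0))"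
  proof (rule sum.cong[OF refl])
    fix i assume "i \<in> {0..m}"
    hence "m - (m - i) = i" "(m choose (m - i)) = (m choose i)" by (auto simp: binomial_symmetric[symmetric])
    thus "(if m - i \<le> k then f (m - i) else 0) = (m choose i) * (if m - i \<le> k then 2^(k-(m-i)) * cnt i (k-(m-i)) else 0)"
      by (simp add: f_def mult_ac)
  qed
  finally show ?thesis .
qed

lemma sc_term:
  "(sc p * (of_nat c * Y ^ d)) $ k = real c * (if k < d then 0 else 2 ^ (k - d) * p $ (k - d))"
proof -
  have e: "sc p * (of_nat c * Y ^ d) = fps_const (real c) * (sc p * Y ^ d)"
    by (simp add: fps_of_nat[symmetric] mult_ac)
  show ?thesis unfolding e fps_mult_left_const_nth fps_X_power_mult_right_nth
    by (simp add: sc_def fps_compose_linear)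
qed

lemma G_nth: "G $ n = Abs_fps (\<lambda>k. real (cnt n k))" by (simp add: G_def)

lemma key_B: "(1 + zv) * G = 1 + zv * (subst2 G aa 2 * w)"
proof (rule fps_ext)
  fix n
  show "((1 + zv) * G) $ n = (1 + zv * (subst2 G aa 2 * w)) $ n"
  proof (cases n)
    case 0
    have "G $ 0 = 1" by (rule fps_ext) (simp add: G_nth cnt_0)
    thus ?thesis using 0 by (simp add: algebra_simps)
  next
    case (Suc m)
    have l: "((1 + zv) * G) $ n = G $ Suc m + G $ m" using Suc by (simp add: algebra_simps)
    have r: "(1 + zv * (subst2 G aa 2 * w)) $ n = (\<Sum>i=0..m. sc (G $ i) * (of_nat (m choose i) * Y ^ (m - i)))"
      using Suc by (simp add: V_formula)
    have "G $ Suc m + G $ m = (\<Sum>i=0..m. sc (G $ i) * (of_nat (m choose i) * Y ^ (m - i)))"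
    proof (rule fps_ext)
      fix k
      have "(G $ Suc m + G $ m) $ k = real (cnt (Suc m) k + cnt m k)" by (simp add: G_nth)
      also have "\<dots> = (\<Sum>i=0..m. real (m choose i) * (if k < m - i then 0 else 2 ^ (k - (m - i)) * real (cnt i (k - (m - i)))))"
        unfolding cnt_rec2 of_nat_sum by (rule sum.cong[OF refl]) (auto simp: not_less)
      also have "\<dots> = (\<Sum>i=0..m. sc (G $ i) * (of_nat (m choose i) * Y ^ (m - i))) $ k"
        by (simp add: fps_sum_nth sc_term G_nth cong: if_cong)
      finally show "(G $ Suc m + G $ m) $ k = (\<Sum>i=0..m. sc (G $ i) * (of_nat (m choose i) * Y ^ (m - i))) $ k" .
    qed
    thus ?thesis using l r by simp
  qed
qed

lemma ring_id: "1 - x * y + ((1 + x) * g - 1) * (1 - x * y) - x * ((1 - y) * (1 - x * y) * g) = (1 - x^2 * y^2) * (g :: 'a :: comm_ring_1)"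
  by (simp add: algebra_simps power2_eq_square)

theorem identity1:
  "G = inverse (1 - zv^2 * yv^2) *
             (1 - zv * yv + zv * (subst2 G (zv * inverse (1 - zv * yv)) 2
                                  - (1 - yv) * (1 - zv * yv) * G))"
proof -
  define S where "S = subst2 G aa 2"
  have a: "zv * inverse (1 - zv * yv) = aa" by (simp add: aa_def w_def)
  have k: "zv * S * w = (1 + zv) * G - 1" using key_B by (simp add: S_def mult.assoc)
  have h1: "zv * S = ((1 + zv) * G - 1) * (1 - zv * yv)"
  proof -
    have "zv * S = zv * S * (w * (1 - zv * yv))" using w_mul by simp
    also have "\<dots> = (zv * S * w) * (1 - zv * yv)" by (simp add: mult.assoc)
    finally show ?thesis using k by simp
  qed
  have h2: "1 - zv * yv + zv * (S - (1 - yv) * (1 - zv * yv) * G) = (1 - zv^2 * yv^2) * G"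
  proof -
    have "1 - zv * yv + zv * (S - (1 - yv) * (1 - zv * yv) * G)
        = 1 - zv * yv + zv * S - zv * ((1 - yv) * (1 - zv * yv) * G)" by (simp add: algebra_simps)
    also have "\<dots> = 1 - zv * yv + ((1 + zv) * G - 1) * (1 - zv * yv) - zv * ((1 - yv) * (1 - zv * yv) * G)"
      by (simp only: h1)
    also have "\<dots> = (1 - zv^2 * yv^2) * G" by (rule ring_id)
    finally show ?thesis .
  qed
  have d0: "(1 - zv^2 * yv^2 :: real fps fps) $ 0 = 1" by (simp add: power2_eq_square)
  have "inverse (1 - zv^2 * yv^2) * (1 - zv * yv + zv * (S - (1 - yv) * (1 - zv * yv) * G)) = G"
    unfolding h2 mult.assoc[symmetric] inv_left[OF d0] by simp
  thus ?thesis unfolding a S_def by simp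
qed


lemma sc_mult: "sc (p * q) = sc p * sc q" unfolding sc_def by (rule fps_compose_mult_distrib) simp
lemma sc_add: "sc (p + q) = sc p + sc q" unfolding sc_def by (rule fps_compose_add_distrib)
lemma sc_diff: "sc (p - q) = sc p - sc q" unfolding sc_def by (rule fps_compose_sub_distrib)
lemma sc_0: "sc 0 = 0" unfolding sc_def by simp
lemma sc_1: "sc 1 = 1" unfolding sc_def by simp
lemma sc_const: "sc (fps_const c) = fps_const c" unfolding sc_def by simp
lemma sc_sum: "sc (sum f A) = sum (\<lambda>i. sc (f i)) A" unfolding sc_def by (rule fps_compose_sum_distrib)
lemma sc_Y: "sc Y = fps_const 2 * Y" unfolding sc_def by simp

definition Mc :: "real fps fps \<Rightarrow> real fps fps" where "Mc F = Abs_fps (\<lambda>n. sc (F $ n))"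

lemma Mc_mult: "Mc (F * H) = Mc F * Mc H"
  by (rule fps_ext) (simp add: Mc_def fps_mult_nth sc_sum sc_mult)
lemma Mc_add: "Mc (F + H) = Mc F + Mc H"
  by (rule fps_ext) (simp add: Mc_def sc_add)
lemma Mc_diff: "Mc (F - H) = Mc F - Mc H"
  by (rule fps_ext) (simp add: Mc_def sc_diff)
lemma Mc_1: "Mc 1 = 1"
  by (rule fps_ext) (simp add: Mc_def sc_1 sc_0)
lemma Mc_zv: "Mc zv = zv"
  by (rule fps_ext) (simp add: Mc_def sc_1 sc_0)
lemma Mc_const: "Mc (fps_const p) = fps_const (sc p)"
  by (rule fps_ext) (simp add: Mc_def sc_0)
lemma Mc_sum: "Mc (sum f A) = sum (\<lambda>i. Mc (f i)) A"
  by (rule fps_ext) (simp add: Mc_def fps_sum_nth sc_sum)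

definition sg :: "real fps fps \<Rightarrow> real fps fps" where "sg F = subst2 F aa 2"

lemma sg_alt: "sg F = Mc F oo aa" by (simp add: sg_def subst2_def Mc_def sc_def)

lemma sg_mult: "sg (F * H) = sg F * sg H"
  unfolding sg_alt Mc_mult by (rule fps_compose_mult_distrib[OF aa0])
lemma sg_add: "sg (F + H) = sg F + sg H"
  unfolding sg_alt Mc_add by (rule fps_compose_add_distrib)
lemma sg_diff: "sg (F - H) = sg F - sg H"
  unfolding sg_alt Mc_diff by (rule fps_compose_sub_distrib)
lemma sg_1: "sg 1 = 1" unfolding sg_alt Mc_1 by simp
lemma sg_zv: "sg zv = aa" unfolding sg_alt Mc_zv using aa0 by simp
lemma sg_const: "sg (fps_const p) = fps_const (sc p)" unfolding sg_alt Mc_const by simp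
lemma sg_yv: "sg yv = 2 * yv"
proof -
  have "sg yv = fps_const (fps_const 2 * Y)" by (simp add: sg_const sc_Y)
  also have "\<dots> = 2 * yv" by (simp add: numeral_fps_const)
  finally show ?thesis .
qed
lemma sg_of_nat: "sg (of_nat c) = of_nat c"
proof -
  have e: "(of_nat c :: real fps fps) = fps_const (fps_const (of_nat c))" by (simp only: fps_of_nat)
  show ?thesis unfolding e sg_const sc_const ..
qed
lemma sg_numeral: "sg (numeral c) = numeral c"
  using sg_const[of "numeral c"] by (simp add: numeral_fps_const sc_def)
lemma sg_sum: "sg (sum f A) = sum (\<lambda>i. sg (f i)) A"
  unfolding sg_alt Mc_sum by (rule fps_compose_sum_distrib)
lemma sg_power: "sg (F ^ k) = sg F ^ k"
  by (induction k) (simp_all add: sg_1 sg_mult)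
lemma sg_0: "sg 0 = 0" using sg_diff[of 0 0] by simp


definition fac :: "nat \<Rightarrow> real fps fps" where "fac i = 1 - (of_nat (2^i) - 1 - yv) * zv"
definition Pk :: "nat \<Rightarrow> real fps fps" where "Pk k = (\<Prod>i=1..k. 1 - (of_nat (2^i) - 1 - yv) * zv)"
definition q :: "nat \<Rightarrow> real fps fps" where "q k = inverse (Pk k)"

lemma Pk_0: "Pk 0 = 1" by (simp add: Pk_def)
lemma Pk_Suc: "Pk (Suc k) = Pk k * fac (Suc k)" by (simp add: Pk_def fac_def)
lemma Pk_nth0: "Pk k $ 0 = 1"
  by (induction k) (simp_all add: Pk_0 Pk_Suc fac_def)
lemma Pq: "Pk k * q k = 1" unfolding q_def by (rule inv_right[OF Pk_nth0])
lemma q_0: "q 0 = 1" unfolding q_def Pk_0 by (rule inv_unique) simp_all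
lemma q_rel: "q k = q (Suc k) * fac (Suc k)"
proof -
  have "q (Suc k) * fac (Suc k) = q (Suc k) * fac (Suc k) * (Pk k * q k)" using Pq by simp
  also have "\<dots> = (Pk (Suc k) * q (Suc k)) * q k" by (simp add: Pk_Suc mult_ac)
  finally show ?thesis using Pq by simp
qed

lemma tel_step: "(1 - (c - 1) * z) * q' = (1 - (c - 1 - y) * z) * q' - z * y * q'"
  for c z y q' :: "'a::comm_ring_1"
  by (simp add: algebra_simps)

lemma gen1:
  fixes b c d x :: "'a::comm_ring_1"
  assumes "b * c = d - x * c"
  shows "x^s * b * c = x^s * d - x^(Suc s) * c"
proof -
  have "x^s * b * c = x^s * (b * c)" by (simp add: mult.assoc)
  also have "\<dots> = x^s * (d - x * c)" using assms by simp
  also have "\<dots> = x^s * d - x^(Suc s) * c" by (simp add: algebra_simps)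
  finally show ?thesis .
qed

lemma gen_tel: "(a - b) + (b - c) = a - (c::'a::ab_group_add)" by simp

lemma gen2:
  fixes c y z w :: "'a::comm_ring_1"
  assumes "w * (1 - z * y) = 1"
  shows "(1 - (c - 1 - 2 * y) * (z * w)) * (1 - z * y) = 1 - (c - 1 - y) * z"
proof -
  have "(1 - (c - 1 - 2 * y) * (z * w)) * (1 - z * y) = (1 - z * y) - (c - 1 - 2 * y) * z * (w * (1 - z * y))"
    by (simp add: algebra_simps)
  also have "\<dots> = (1 - z * y) - (c - 1 - 2 * y) * z" using assms by simp
  also have "\<dots> = 1 - (c - 1 - y) * z" by (simp add: algebra_simps)
  finally show ?thesis .
qed

lemma gen3:
  fixes y z w :: "'a::comm_ring_1"
  assumes "w * (1 - z * y) = 1"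
  shows "(1 + z * w * (2 * y)) * (1 - z * y) = 1 + z * y"
proof -
  have "(1 + z * w * (2 * y)) * (1 - z * y) = (1 - z * y) + 2 * y * z * (w * (1 - z * y))"
    by (simp add: algebra_simps)
  also have "\<dots> = (1 - z * y) + 2 * y * z" using assms by simp
  also have "\<dots> = 1 + z * y" by (simp add: algebra_simps)
  finally show ?thesis .
qed

lemma telescope:
  "(\<Sum>k<Suc N. (zv * yv) ^ k * (1 - (of_nat (2 ^ k) - 1) * zv) * q k)
     = 1 + zv * yv - (zv * yv) ^ Suc N * q N"
proof (induction N)
  case 0
  thus ?case by (simp add: q_0)
next
  case (Suc N)
  have "(1 - (of_nat (2 ^ Suc N) - 1) * zv) * q (Suc N) = q N - zv * yv * q (Suc N)"
    unfolding q_rel[of N] fac_def by (simp add: algebra_simps)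
  hence st: "(zv * yv) ^ Suc N * (1 - (of_nat (2 ^ Suc N) - 1) * zv) * q (Suc N)
      = (zv * yv) ^ Suc N * q N - (zv * yv) ^ Suc (Suc N) * q (Suc N)"
    by (rule gen1)
  show ?case
    unfolding sum.lessThan_Suc[of _ "Suc N"] Suc.IH st by (rule gen_tel)
qed

lemma fac_sg: "sg (fac i) * (1 - zv * yv) = fac i"
proof -
  have "sg (fac i) = 1 - (of_nat (2^i) - 1 - 2 * yv) * (zv * w)"
    by (simp add: fac_def sg_diff sg_1 sg_mult sg_of_nat sg_yv sg_zv aa_def sg_power sg_numeral)
  thus ?thesis unfolding fac_def using gen2[OF w_mul] by simp
qed

lemma Pk_sg: "sg (Pk k) * (1 - zv * yv) ^ k = Pk k"
proof (induction k)
  case 0 thus ?case by (simp add: Pk_0 sg_1)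
next
  case (Suc k)
  have "sg (Pk (Suc k)) * (1 - zv * yv) ^ Suc k = (sg (Pk k) * (1 - zv * yv) ^ k) * (sg (fac (Suc k)) * (1 - zv * yv))"
    by (simp add: Pk_Suc sg_mult mult_ac)
  thus ?case using Suc.IH fac_sg by (simp add: Pk_Suc)
qed

lemma q_sg: "sg (q k) = (1 - zv * yv) ^ k * q k"
proof -
  have h: "sg (Pk k) * sg (q k) = 1" using Pq[of k] by (metis sg_mult sg_1)
  have "sg (q k) = sg (q k) * (Pk k * q k)" using Pq by simp
  also have "\<dots> = sg (q k) * ((sg (Pk k) * (1 - zv * yv) ^ k) * q k)" using Pk_sg by simp
  also have "\<dots> = (sg (Pk k) * sg (q k)) * ((1 - zv * yv) ^ k * q k)" by (simp add: mult_ac)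
  finally show ?thesis using h by simp
qed

definition t :: "nat \<Rightarrow> real fps fps" where
  "t k = zv ^ k * yv ^ k * inverse (\<Prod>i=1..k. 1 - (of_nat (2^i) - 1 - yv) * zv)"

lemma t_alt: "t k = (zv * yv) ^ k * q k" by (simp add: t_def q_def Pk_def power_mult_distrib)

lemma t_sg: "sg (t k) = 2 ^ k * t k"
proof -
  have "sg (t k) = (zv * w * (2 * yv)) ^ k * ((1 - zv * yv) ^ k * q k)"
    by (simp only: t_alt sg_mult sg_power sg_zv sg_yv q_sg aa_def)
  also have "\<dots> = 2 ^ k * ((zv * yv) ^ k * q k) * (w * (1 - zv * yv)) ^ k"
    by (simp add: power_mult_distrib mult_ac)
  finally show ?thesis by (simp add: w_mul t_alt)
qed

lemma inv1_nth0: "(1 + zv * yv :: real fps fps) $ 0 = 1" by simp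

lemma inv1_sg: "sg (inverse (1 + zv * yv)) = (1 - zv * yv) * inverse (1 + zv * yv)"
proof -
  let ?i = "inverse (1 + zv * yv)"
  have h: "sg (1 + zv * yv) * sg ?i = 1" using inv_right[OF inv1_nth0] by (metis sg_mult sg_1)
  have e: "sg (1 + zv * yv) * (1 - zv * yv) = 1 + zv * yv"
  proof -
    have "sg (1 + zv * yv) = 1 + zv * w * (2 * yv)"
      by (simp add: sg_add sg_1 sg_mult sg_zv sg_yv aa_def)
    thus ?thesis using gen3[OF w_mul] by simp
  qed
  have "sg ?i = sg ?i * ((1 + zv * yv) * ?i)" using inv_right[OF inv1_nth0] by simp
  also have "\<dots> = sg ?i * (sg (1 + zv * yv) * (1 - zv * yv) * ?i)" using e by simp
  also have "\<dots> = (sg (1 + zv * yv) * sg ?i) * ((1 - zv * yv) * ?i)" by (simp add: mult_ac)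
  finally show ?thesis using h by simp
qed


lemma t_nth_zero: "n < k \<Longrightarrow> t k $ n = 0"
proof -
  assume "n < k"
  have "t k = zv ^ k * (yv ^ k * q k)" by (simp add: t_alt power_mult_distrib mult.assoc)
  thus ?thesis using \<open>n < k\<close> by (simp add: fps_X_power_mult_nth)
qed

lemma suminf_nth:
  fixes u :: "nat \<Rightarrow> real fps fps"
  assumes z: "\<And>k n. n < k \<Longrightarrow> u k $ n = 0" and nN: "n < N"
  shows "(\<Sum>k. u k) $ n = (\<Sum>k<N. u k) $ n"
proof -
  define L where "L = Abs_fps (\<lambda>n. \<Sum>k<Suc n. u k $ n)"
  have part: "(\<Sum>k<M. u k) $ m = (\<Sum>k<Suc m. u k $ m)" if "m < M" for M m
  proof -
    have "(\<Sum>k<M. u k) $ m = (\<Sum>k<M. u k $ m)" by (simp add: fps_sum_nth)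
    also have "\<dots> = (\<Sum>k<Suc m. u k $ m)"
      by (rule sum.mono_neutral_right) (use that z in auto)
    finally show ?thesis .
  qed
  have "u sums L" unfolding sums_def
  proof (rule tendsto_fpsI)
    fix m
    show "eventually (\<lambda>M. (\<Sum>k<M. u k) $ m = L $ m) sequentially"
      by (rule eventually_sequentiallyI[of "Suc m"]) (simp add: part L_def)
  qed
  hence "suminf u = L" by (rule sums_unique[symmetric])
  thus ?thesis using part[OF nN] by (simp add: L_def)
qed

lemma mult_nth_cong:
  fixes A B B' :: "real fps fps"
  assumes "\<And>j. j \<le> n \<Longrightarrow> B $ j = B' $ j"
  shows "(A * B) $ n = (A * B') $ n"
  unfolding fps_mult_nth using assms by (intro sum.cong) auto

lemma causal:
  fixes H :: "real fps fps"
  assumes h: "\<And>n. n < N \<Longrightarrow> ((1 + zv) * H - zv * (sg H * w)) $ n = 0"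
  shows "n < N \<Longrightarrow> H $ n = 0"
proof (induction n rule: less_induct)
  case (less n)
  show ?case
  proof (cases n)
    case 0
    thus ?thesis using h[of 0] less.prems by (simp add: algebra_simps)
  next
    case (Suc m)
    have Hm: "H $ i = 0" if "i \<le> m" for i using less.IH[of i] Suc that less.prems by auto
    have V0: "(sg H * w) $ m = 0"
      unfolding sg_def V_formula using Hm by (simp add: sc_0)
    have "((1 + zv) * H - zv * (sg H * w)) $ n = H $ Suc m + H $ m - (sg H * w) $ m"
      using Suc by (simp add: distrib_right)
    thus ?thesis using h[of n] less.prems Suc Hm[of m] V0 by simp
  qed
qed

definition II :: "real fps fps" where "II = inverse (1 + zv * yv)"
lemma II_mul: "II * (1 + zv * yv) = 1" unfolding II_def by (rule inv_left) simp

definition FN :: "nat \<Rightarrow> real fps fps" where "FN M = II * (\<Sum>k<M. t k)"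

lemma sg_FN: "sg (FN M) * w = II * (\<Sum>k<M. 2 ^ k * t k)"
proof -
  have "sg (FN M) = (1 - zv * yv) * II * (\<Sum>k<M. 2 ^ k * t k)"
    by (simp add: FN_def sg_mult sg_sum t_sg inv1_sg II_def)
  hence "sg (FN M) * w = (w * (1 - zv * yv)) * II * (\<Sum>k<M. 2 ^ k * t k)" by (simp add: mult_ac)
  thus ?thesis by (simp add: w_mul)
qed

lemma term_id: "(1 + z) * tt - z * (c * tt) = (1 - (c - 1) * z) * (tt :: 'a :: comm_ring_1)"
  by (simp add: algebra_simps)

lemma combo: "(1 + zv) * (\<Sum>k<M. t k) - zv * (\<Sum>k<M. 2 ^ k * t k)
   = (\<Sum>k<M. (zv * yv) ^ k * (1 - (of_nat (2 ^ k) - 1) * zv) * q k)"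
proof -
  have "(1 + zv) * (\<Sum>k<M. t k) - zv * (\<Sum>k<M. 2 ^ k * t k) = (\<Sum>k<M. (1 + zv) * t k - zv * (2 ^ k * t k))"
    by (simp add: sum_distrib_left sum_subtractf)
  also have "\<dots> = (\<Sum>k<M. (zv * yv) ^ k * (1 - (of_nat (2 ^ k) - 1) * zv) * q k)"
  proof (rule sum.cong[OF refl])
    fix k
    have "(1 + zv) * t k - zv * (2 ^ k * t k) = (1 - (2 ^ k - 1) * zv) * t k" by (rule term_id)
    also have "\<dots> = (zv * yv) ^ k * (1 - (of_nat (2 ^ k) - 1) * zv) * q k" by (simp add: t_alt mult_ac)
    finally show "(1 + zv) * t k - zv * (2 ^ k * t k) = (zv * yv) ^ k * (1 - (of_nat (2 ^ k) - 1) * zv) * q k" .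
  qed
  finally show ?thesis .
qed

lemma gen4: "ii * (1 + x) = 1 \<Longrightarrow> (1 + z) * (ii * T) - 1 - z * (ii * T2) = ii * ((1 + z) * T - z * T2 - (1 + x))"
  for ii x z T T2 :: "'a::comm_ring_1"
  by (simp add: algebra_simps)

lemma defect: "(1 + zv) * FN (Suc N) - 1 - zv * (sg (FN (Suc N)) * w) = - (II * ((zv * yv) ^ Suc N * q N))"
proof -
  have "(1 + zv) * FN (Suc N) - 1 - zv * (sg (FN (Suc N)) * w)
      = II * ((1 + zv) * (\<Sum>k<Suc N. t k) - zv * (\<Sum>k<Suc N. 2 ^ k * t k) - (1 + zv * yv))"
    unfolding sg_FN unfolding FN_def by (rule gen4[OF II_mul])
  also have "\<dots> = II * (1 + zv * yv - (zv * yv) ^ Suc N * q N - (1 + zv * yv))"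
    unfolding combo telescope ..
  also have "\<dots> = - (II * ((zv * yv) ^ Suc N * q N))" by (simp add: algebra_simps)
  finally show ?thesis .
qed

lemma gen5: "(1 + z) * (g - f) - z * ((sG - sF) * ww) = ((1 + z) * g - 1 - z * (sG * ww)) - ((1 + z) * f - 1 - z * (sF * ww))"
  for z g f sG sF ww :: "'a::comm_ring_1"
  by (simp add: algebra_simps)

lemma G_FN: "n < Suc N \<Longrightarrow> G $ n = FN (Suc N) $ n"
proof -
  assume nN: "n < Suc N"
  define H where "H = G - FN (Suc N)"
  have PG: "(1 + zv) * G - 1 - zv * (sg G * w) = 0" using key_B by (simp add: sg_def)
  have "(1 + zv) * H - zv * (sg H * w) = II * ((zv * yv) ^ Suc N * q N)"
    unfolding H_def sg_diff gen5 PG defect by simp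
  also have "\<dots> = zv ^ Suc N * (II * yv ^ Suc N * q N)" by (simp add: power_mult_distrib mult_ac)
  finally have e: "(1 + zv) * H - zv * (sg H * w) = zv ^ Suc N * (II * yv ^ Suc N * q N)" .
  have "H $ n = 0"
  proof (rule causal[of "Suc N"])
    fix m :: nat assume "m < Suc N"
    thus "((1 + zv) * H - zv * (sg H * w)) $ m = 0" unfolding e fps_X_power_mult_nth by simp
  qed (rule nN)
  thus ?thesis by (simp add: H_def)
qed

theorem identity2:
  "G = inverse (1 + zv * yv) *
             (\<Sum>k. zv^k * yv^k *
                  inverse (\<Prod>i=1..k. 1 - (of_nat (2^i) - 1 - yv) * zv))"
proof (rule fps_ext)
  fix n
  have e: "(\<lambda>k. zv^k * yv^k * inverse (\<Prod>i=1..k. 1 - (of_nat (2^i) - 1 - yv) * zv)) = t"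
    by (rule ext) (simp add: t_def)
  have "G $ n = FN (Suc n) $ n" by (rule G_FN) simp
  also have "\<dots> = (II * (\<Sum>k. t k)) $ n"
    unfolding FN_def
    by (rule mult_nth_cong) (rule suminf_nth[symmetric], rule t_nth_zero, auto)
  finally show "G $ n = (inverse (1 + zv * yv) * (\<Sum>k. zv^k * yv^k *
                  inverse (\<Prod>i=1..k. 1 - (of_nat (2^i) - 1 - yv) * zv))) $ n"
    unfolding e by (simp add: II_def)
qed


theorem proposition5:
  shows "G = inverse (1 - zv^2 * yv^2) *
             (1 - zv * yv + zv * (subst2 G (zv * inverse (1 - zv * yv)) 2
                                  - (1 - yv) * (1 - zv * yv) * G))
       \<and> G = inverse (1 + zv * yv) *
             (\<Sum>k. zv^k * yv^k *
                  inverse (\<Prod>i=1..k. 1 - (of_nat (2^i) - 1 - yv) * zv))"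
    using identity1 identity2 by (rule conjI)

end
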